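(* Let $M=2$ and let the two users' locations $(x_1,y_1,0)$ and $(x_2,y_2,0)$ be independent and uniformly distributed on the rectangle $[-\frac{D_{\rm L}}{2},\frac{D_{\rm L}}{2}]\times[-\frac{D_{\rm W}}{2},\frac{D_{\rm W}}{2}]$ (so all four coordinates are independent uniform). Let $d>0$, $\eta>0$, $\sigma^2>0$, $R>0$, $\bar P>0$, $\epsilon=\frac{\sigma^2}{\eta}(e^{2R}-1)$, $\tau_m=\epsilon(y_m^2+d^2)$, $x^*=\frac{x_1+x_2}{2}$, and define for $m\in\{1,2\}$ the power outage probability $$\mathbb{P}^{\rm o}_m=\mathbb{P}\left(\epsilon(x^*-x_m)^2+\tau_m\ge\bar P\right).$$ If $\frac{\bar P}{\epsilon}>d^2$, then $$\mathbb{P}^{\rm o}_m=\frac{2}{D_{\rm W}}\left(\frac{D_{\rm W}}{2}-\min\left\{\frac{D_{\rm W}}{2},\sqrt{\frac{\theta_1D_{\rm L}^2}{4}}\right\}\right)+\frac{2}{D_{\rm W}}\big(g(\theta_2)-g(\theta_3)\big),$$ and otherwise $\mathbb{P}^{\rm o}_m=1$. Here $\theta_1=\frac{4}{D_{\rm L}^2}\left(\frac{\bar P}{\epsilon}-d^2\right)$, $\theta_2=\min\left\{\frac{D_{\rm W}}{2},\sqrt{\frac{D_{\rm L}^2}{4}\theta_1}\right\}$, $\theta_3=\sqrt{\max\left\{0,\frac{D_{\rm L}^2}{4}(\theta_1-1)\right\}}$, $\theta_4=\frac{D_{\rm L}^2}{4}\theta_1$, and, if $\theta_2\ge\theta_3$,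 $$g(y)=y+\theta_1y-\frac{4}{3D_{\rm L}^2}y^3-\frac{4}{D_{\rm L}}\left(\frac{y}{2}\sqrt{\theta_4-y^2}+\frac{\theta_4}{2}\sin^{-1}\!\left(\frac{y}{\sqrt{\theta_4}}\right)\right),$$ while $g(y)=0$ if $\theta_2<\theta_3$.
   Context: Interpretation: two-user TDMA pinching-antenna system with the antenna at the location $x^*=\frac{x_1+x_2}{2}$ on a waveguide at height $d$, user $m$ requiring power $\epsilon(x^*-x_m)^2+\tau_m$ to achieve rate $R$; $\bar P$ is a per-user power budget. $\eta=\frac{c^2}{16\pi^2f_c^2}$, $\sigma^2$ is noise power. *)

theory Defs
  imports "HOL-Probability.Probability"
begin

definition user_space :: "real \<Rightarrow> real \<Rightarrow> (real \<times> real \<times> real \<times> real) measure" where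
  "user_space DL DW =
     (let Ux = uniform_measure lborel {-DL/2..DL/2};
          Uy = uniform_measure lborel {-DW/2..DW/2}
      in Ux \<Otimes>\<^sub>M (Uy \<Otimes>\<^sub>M (Ux \<Otimes>\<^sub>M Uy)))"

definition xpos :: "nat \<Rightarrow> real \<times> real \<times> real \<times> real \<Rightarrow> real" where
  "xpos m \<omega> = (case \<omega> of (x1, y1, x2, y2) \<Rightarrow> if m = 1 then x1 else x2)"

definition ypos :: "nat \<Rightarrow> real \<times> real \<times> real \<times> real \<Rightarrow> real" where
  "ypos m \<omega> = (case \<omega> of (x1, y1, x2, y2) \<Rightarrow> if m = 1 then y1 else y2)"

definition outage_prob ::
  "real \<Rightarrow> real \<Rightarrow> real \<Rightarrow> real \<Rightarrow> real \<Rightarrow> real \<Rightarrow> real \<Rightarrow> nat \<Rightarrow> real" where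
  "outage_prob DL DW d eta sigma2 R Pbar (m::nat) =
     (let eps = sigma2 / eta * (exp (2 * R) - 1) in
      measure (user_space DL DW)
        {\<omega> \<in> space (user_space DL DW).
           (let xs = (xpos 1 \<omega> + xpos 2 \<omega>) / 2;
                tau = eps * ((ypos m \<omega>)\<^sup>2 + d\<^sup>2)
            in eps * (xs - xpos m \<omega>)\<^sup>2 + tau \<ge> Pbar)})"

definition gfun :: "real \<Rightarrow> real \<Rightarrow> real \<Rightarrow> real \<Rightarrow> real \<Rightarrow> real \<Rightarrow> real" where
  "gfun DL th1 th2 th3 th4 y =
     (if th2 \<ge> th3 then
        y + th1 * y - 4 / (3 * DL\<^sup>2) * y ^ 3
          - 4 / DL * (y / 2 * sqrt (th4 - y\<^sup>2) + th4 / 2 * arcsin (y / sqrt th4))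
      else 0)"

end

theory Submission
  imports Defs
begin

lemma deriv_maxsq:
  fixes a x :: real
  assumes "x \<noteq> -a"
  shows "((\<lambda>t. (max 0 (t + a))\<^sup>2) has_real_derivative 2 * max 0 (x + a)) (at x)"
proof (cases "x + a > 0")
  case True
  have d: "((\<lambda>t. (t + a)\<^sup>2) has_real_derivative 2 * max 0 (x + a)) (at x)"
    using True by (auto intro!: derivative_eq_intros)
  show ?thesis
    apply (rule has_field_derivative_transform_within_open[OF d, where S="{-a<..}"])
    using True apply simp_all
    done
next
  case False
  then have F: "x + a < 0" using assms by auto
  have d: "((\<lambda>t. 0::real) has_real_derivative 2 * max 0 (x + a)) (at x)"
    using F by (auto intro!: derivative_eq_intros)
  show ?thesis
    apply (rule has_field_derivative_transform_within_open[OF d, where S="{..< -a}"])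
    using F apply simp_all
    done
qed
lemma deriv_maxsq2:
  fixes a x :: real
  assumes "x \<noteq> a"
  shows "((\<lambda>t. (max 0 (a - t))\<^sup>2) has_real_derivative - (2 * max 0 (a - x))) (at x)"
proof -
  have "((\<lambda>t. (max 0 (t + a))\<^sup>2) \<circ> uminus has_real_derivative 2 * max 0 (- x + a) * (-1)) (at x)"
    apply (rule DERIV_chain)
    using assms apply (intro deriv_maxsq) apply simp
    apply (rule derivative_eq_intros refl)+ done
  then show ?thesis by (simp add: o_def)
qed


lemma x_inner:
  fixes L c x :: real
  assumes L: "L > 0" and c: "c > 0" and x: "x \<in> {-L..L}"
  shows "(\<integral>\<^sup>+x2. indicator {x2. c \<le> ((x - x2)/2)^2} x2 \<partial>uniform_measure lborel {-L..L})
     = ennreal ((max 0 (x - 2 * sqrt c + L) + max 0 (L - x - 2 * sqrt c)) / (2*L))"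
proof -
  define s where "s = sqrt c"
  have s: "s > 0" "c = s^2" using c by (auto simp: s_def)
  have meas: "{x2. c \<le> ((x - x2)/2)^2} \<in> sets lborel"
    by measurable
  have eq: "{-L..L} \<inter> {x2. c \<le> ((x - x2)/2)^2} = {-L..x-2 * s} \<union> {x+2 * s..L}"
  proof -
    have "c \<le> ((x - x2)/2)^2 \<longleftrightarrow> x2 \<le> x - 2 * s \<or> x + 2 * s \<le> x2" for x2
    proof -
      have "c \<le> ((x - x2)/2)^2 \<longleftrightarrow> s \<le> \<bar>(x - x2)/2\<bar>"
        using s by (metis abs_le_square_iff abs_of_pos)
      also have "\<dots> \<longleftrightarrow> x2 \<le> x - 2 * s \<or> x + 2 * s \<le> x2" by auto
      finally show ?thesis .
    qed
    then have "y \<in> {-L..L} \<inter> {x2. c \<le> ((x - x2)/2)^2} \<longleftrightarrow> y \<in> {-L..x-2 * s} \<union> {x+2 * s..L}" for y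
      using s x by (simp only: Int_iff Un_iff mem_Collect_eq atLeastAtMost_iff) linarith
    then show ?thesis by blast
  qed
  have "(\<integral>\<^sup>+x2. indicator {x2. c \<le> ((x - x2)/2)^2} x2 \<partial>uniform_measure lborel {-L..L})
      = emeasure (uniform_measure lborel {-L..L}) {x2. c \<le> ((x - x2)/2)^2}"
    apply (rule nn_integral_indicator) using meas by simp
  also have "\<dots> = emeasure lborel ({-L..x-2 * s} \<union> {x+2 * s..L}) / emeasure lborel {-L..L}"
    apply (subst emeasure_uniform_measure) using meas apply simp_all
    apply (subst eq) by (rule refl)
  also have "emeasure lborel ({-L..x-2 * s} \<union> {x+2 * s..L}) = emeasure lborel {-L..x-2 * s} + emeasure lborel {x+2 * s..L}"
    by (rule plus_emeasure[symmetric]) (use s in auto)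
  also have "\<dots> = ennreal (max 0 (x - 2 * sqrt c + L) + max 0 (L - x - 2 * sqrt c))"
    unfolding emeasure_lborel_Icc_eq s_def[symmetric]
    by (subst ennreal_plus[symmetric]) (auto simp: max_def)
  also have "emeasure lborel {-L..L} = ennreal (2*L)" using L by simp
  finally have "(\<integral>\<^sup>+x2. indicator {x2. c \<le> ((x - x2)/2)^2} x2 \<partial>uniform_measure lborel {-L..L}) = ennreal (max 0 (x - 2 * sqrt c + L) + max 0 (L - x - 2 * sqrt c)) / ennreal (2*L)" .
  also have "\<dots> = ennreal ((max 0 (x - 2 * sqrt c + L) + max 0 (L - x - 2 * sqrt c)) / (2*L))"
    by (rule divide_ennreal) (simp_all add: L)
  finally show ?thesis .
qed



lemma phi_integral:
  fixes L s :: real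
  assumes L: "L > 0" and s: "s > 0"
  shows "((\<lambda>x. (max 0 (x - 2 * s + L) + max 0 (L - x - 2 * s)) / (2*L)) has_integral
           (max 0 (2*L - 2 * s))\<^sup>2 / (2*L)) {-L..L}"
proof -
  define a where "a = L - 2 * s"
  define F where "F x = ((max 0 (x + a))\<^sup>2 - (max 0 (a - x))\<^sup>2) / (4*L)" for x
  have "((\<lambda>x. (max 0 (x - 2 * s + L) + max 0 (L - x - 2 * s)) / (2*L)) has_integral (F L - F (-L))) {-L..L}"
  proof (rule fundamental_theorem_of_calculus_interior_strong[where S="{-a, a}"])
    show "finite {-a, a}" by simp
    show "-L \<le> L" using L by simp
    show "continuous_on {-L..L} F" unfolding F_def using L by (auto intro!: continuous_intros)
    fix x assume x: "x \<in> {-L<..<L} - {-a, a}"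
    have d1: "((\<lambda>t. (max 0 (t + a))\<^sup>2) has_real_derivative 2 * max 0 (x + a)) (at x)"
      using x by (intro deriv_maxsq) auto
    have d2: "((\<lambda>t. (max 0 (a - t))\<^sup>2) has_real_derivative - (2 * max 0 (a - x))) (at x)"
      using x by (intro deriv_maxsq2) auto
    have "(F has_real_derivative (2 * max 0 (x + a) - (- (2 * max 0 (a - x)))) / (4*L)) (at x)"
      unfolding F_def by (intro DERIV_cdivide DERIV_diff d1 d2)
    moreover have "(2 * max 0 (x + a) - (- (2 * max 0 (a - x)))) / (4*L) = (max 0 (x - 2 * s + L) + max 0 (L - x - 2 * s)) / (2*L)"
      unfolding a_def using L by (simp add: field_simps)
    ultimately show "(F has_vector_derivative (max 0 (x - 2 * s + L) + max 0 (L - x - 2 * s)) / (2*L)) (at x)"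
      unfolding has_real_derivative_iff_has_vector_derivative[symmetric] by simp
  qed
  also have "F L - F (-L) = (max 0 (2*L - 2 * s))\<^sup>2 / (2*L)"
    unfolding F_def a_def using s L by (simp add: field_simps)
  finally show ?thesis .
qed



lemma x_outer:
  fixes L c :: real
  assumes L: "L > 0" and c: "c > 0"
  shows "(\<integral>\<^sup>+x1. (\<integral>\<^sup>+x2. indicator {x2. c \<le> ((x1 - x2)/2)^2} x2 \<partial>uniform_measure lborel {-L..L}) \<partial>uniform_measure lborel {-L..L})
     = ennreal ((max 0 (1 - sqrt c / L))\<^sup>2)"
proof -
  define \<phi> where "\<phi> x = (max 0 (x - 2 * sqrt c + L) + max 0 (L - x - 2 * sqrt c)) / (2*L)" for x
  have "(\<integral>\<^sup>+x1. (\<integral>\<^sup>+x2. indicator {x2. c \<le> ((x1 - x2)/2)^2} x2 \<partial>uniform_measure lborel {-L..L}) \<partial>uniform_measure lborel {-L..L})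
      = (\<integral>\<^sup>+x1. ennreal (\<phi> x1) \<partial>uniform_measure lborel {-L..L})"
  proof (rule nn_integral_cong_AE)
    show "AE x in uniform_measure lborel {-L..L}. (\<integral>\<^sup>+x2. indicator {x2. c \<le> ((x - x2)/2)^2} x2 \<partial>uniform_measure lborel {-L..L}) = ennreal (\<phi> x)"
      apply (rule AE_uniform_measureI) apply simp apply (rule AE_I2) apply (rule impI)
      unfolding \<phi>_def apply (rule x_inner[OF L c]) by simp
  qed
  also have "\<dots> = (\<integral>\<^sup>+x1. ennreal (\<phi> x1) * indicator {-L..L} x1 \<partial>lborel) / emeasure lborel {-L..L}"
    by (rule nn_integral_uniform_measure) (auto simp: \<phi>_def)
  also have "(\<integral>\<^sup>+x1. ennreal (\<phi> x1) * indicator {-L..L} x1 \<partial>lborel) = ennreal ((max 0 (2*L - 2 * sqrt c))\<^sup>2 / (2*L))"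
    by (rule nn_integral_has_integral_lebesgue') (use L c in \<open>auto simp: \<phi>_def intro!: phi_integral\<close>)
  also have "emeasure lborel {-L..L} = ennreal (2*L)" using L by simp
  also have "ennreal ((max 0 (2*L - 2 * sqrt c))\<^sup>2 / (2*L)) / ennreal (2*L) = ennreal ((max 0 (2*L - 2 * sqrt c))\<^sup>2 / (2*L) / (2*L))"
    by (rule divide_ennreal) (simp_all add: L divide_nonneg_pos)
  also have "(max 0 (2*L - 2 * sqrt c))\<^sup>2 / (2*L) / (2*L) = (max 0 (1 - sqrt c / L))\<^sup>2"
  proof -
    have "max 0 (2*L - 2 * sqrt c) = (2*L) * max 0 (1 - sqrt c / L)"
      using L by (simp add: max_def field_simps)
    then show ?thesis using L by (simp add: power_mult_distrib power2_eq_square)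
  qed
  finally show ?thesis .
qed



definition Gf :: "real \<Rightarrow> real \<Rightarrow> real \<Rightarrow> real" where
  "Gf L K y = y + K / L\<^sup>2 * y - y ^ 3 / (3 * L\<^sup>2)
     - 2 / L * (y / 2 * sqrt (K - y\<^sup>2) + K / 2 * arcsin (y / sqrt K))"

lemma Gf_deriv:
  fixes L K y :: real
  assumes L: "L > 0" and K: "K > 0" and y: "-sqrt K < y" "y < sqrt K"
  shows "(Gf L K has_real_derivative (1 - sqrt (K - y\<^sup>2) / L)\<^sup>2) (at y)"
proof -
  define s where "s = sqrt (K - y\<^sup>2)"
  have "\<bar>y\<bar> < sqrt K" using y by auto
  then have "\<bar>y\<bar>\<^sup>2 < (sqrt K)\<^sup>2" by (intro power_strict_mono) auto
  then have y2: "y\<^sup>2 < K" using K by simp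
  have s: "s > 0" "s\<^sup>2 = K - y\<^sup>2" using y2 by (auto simp: s_def)
  have rK: "sqrt K > 0" "(sqrt K)\<^sup>2 = K" using K by auto
  have kk: "K * a / sqrt K = a * sqrt K" for a
    using rK by (metis nonzero_mult_div_cancel_left order_less_irrefl power2_eq_square mult.commute mult.left_commute)
  have yr: "-1 < y / sqrt K" "y / sqrt K < 1" using y rK by (auto simp: field_simps)
  have q: "sqrt (1 - (y / sqrt K)\<^sup>2) = s / sqrt K"
  proof -
    have "1 - (y / sqrt K)\<^sup>2 = (s / sqrt K)\<^sup>2" using s rK K by (simp add: field_simps power_divide)
    then show ?thesis using s rK by simp
  qed
  have "(Gf L K has_real_derivative
      1 + K / L\<^sup>2 - 3 * y\<^sup>2 / (3 * L\<^sup>2)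
      - 2 / L * (1 / 2 * s + y / 2 * (- (2 * y) / (2 * s)) + K / 2 * (inverse (sqrt (1 - (y / sqrt K)\<^sup>2)) / sqrt K))) (at y)"
    unfolding Gf_def[abs_def] s_def
    using yr y2 L K
    apply (auto intro!: derivative_eq_intros DERIV_arcsin simp: power2_eq_square kk)
    by (simp add: field_simps)
  moreover have "1 + K / L\<^sup>2 - 3 * y\<^sup>2 / (3 * L\<^sup>2)
      - 2 / L * (1 / 2 * s + y / 2 * (- (2 * y) / (2 * s)) + K / 2 * (inverse (sqrt (1 - (y / sqrt K)\<^sup>2)) / sqrt K))
      = (1 - sqrt (K - y\<^sup>2) / L)\<^sup>2"
  proof -
    have "K / 2 * (inverse (sqrt (1 - (y / sqrt K)\<^sup>2)) / sqrt K) = K / (2 * s)"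
      unfolding q using s rK by (simp add: field_simps)
    moreover have "1 / 2 * s + y / 2 * (- (2 * y) / (2 * s)) + K / (2 * s) = s"
      using s by (simp add: field_simps power2_eq_square)
    ultimately show ?thesis
      unfolding s_def[symmetric] using s L by (simp add: field_simps power2_eq_square)
  qed
  ultimately show ?thesis by simp
qed



lemma clamp_deriv:
  fixes a b x :: real and G G' :: "real \<Rightarrow> real"
  assumes ab: "a < b" and x: "x \<noteq> a" "x \<noteq> b"
    and D: "\<And>t. a < t \<Longrightarrow> t < b \<Longrightarrow> (G has_real_derivative G' t) (at t)"
  shows "((\<lambda>t. G (max a (min t b))) has_real_derivative (if a < x \<and> x < b then G' x else 0)) (at x)"
proof -
  consider "x < a" | "a < x \<and> x < b" | "b < x" using x by linarith
  then show ?thesis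
  proof cases
    case 1
    have d: "((\<lambda>t. G a) has_real_derivative (if a < x \<and> x < b then G' x else 0)) (at x)"
      using 1 by (simp add: DERIV_const)
    show ?thesis
      apply (rule has_field_derivative_transform_within_open[OF d, where S="{..<a}"])
      using 1 ab by auto
  next
    case 2
    have d: "(G has_real_derivative (if a < x \<and> x < b then G' x else 0)) (at x)"
      using 2 D by simp
    show ?thesis
      apply (rule has_field_derivative_transform_within_open[OF d, where S="{a<..<b}"])
      using 2 ab by auto
  next
    case 3
    have d: "((\<lambda>t. G b) has_real_derivative (if a < x \<and> x < b then G' x else 0)) (at x)"
      using 3 by (simp add: DERIV_const)
    show ?thesis
      apply (rule has_field_derivative_transform_within_open[OF d, where S="{b<..}"])
      using 3 ab by auto
  qed
qed

lemma max0_deriv: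
  fixes a x :: real
  assumes "x \<noteq> a"
  shows "((\<lambda>t. max 0 (t - a)) has_real_derivative (if a < x then 1 else 0)) (at x)"
proof (cases "a < x")
  case True
  have d: "((\<lambda>t. t - a) has_real_derivative (if a < x then 1 else 0)) (at x)"
    using True by (auto intro!: derivative_eq_intros)
  show ?thesis
    apply (rule has_field_derivative_transform_within_open[OF d, where S="{a<..}"])
    using True by auto
next
  case False
  then have F: "x < a" using assms by auto
  have d: "((\<lambda>t. 0) has_real_derivative (if a < x then 1 else 0)) (at x)"
    using F by (simp add: DERIV_const)
  show ?thesis
    apply (rule has_field_derivative_transform_within_open[OF d, where S="{..<a}"])
    using F by auto
qed

lemma min0_deriv:
  fixes a x :: real
  assumes "x \<noteq> -a"
  shows "((\<lambda>t. min 0 (t + a)) has_real_derivative (if x < -a then 1 else 0)) (at x)"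
proof (cases "x < -a")
  case True
  have d: "((\<lambda>t. t + a) has_real_derivative (if x < -a then 1 else 0)) (at x)"
    using True by (auto intro!: derivative_eq_intros)
  show ?thesis
    apply (rule has_field_derivative_transform_within_open[OF d, where S="{..< -a}"])
    using True by auto
next
  case False
  then have F: "-a < x" using assms by auto
  have d: "((\<lambda>t. 0) has_real_derivative (if x < -a then 1 else 0)) (at x)"
    using F by (simp add: DERIV_const)
  show ?thesis
    apply (rule has_field_derivative_transform_within_open[OF d, where S="{-a<..}"])
    using F by auto
qed



definition Pout :: "real \<Rightarrow> real \<Rightarrow> real" where
  "Pout L c = (if c \<le> 0 then 1 else (max 0 (1 - sqrt c / L))\<^sup>2)"

definition Phi :: "real \<Rightarrow> real \<Rightarrow> real \<Rightarrow> real" where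
  "Phi L K y = (let th3 = sqrt (max 0 (K - L\<^sup>2)); r = sqrt K in
     (Gf L K (max th3 (min y r)) - Gf L K th3) + (Gf L K (max (-r) (min y (-th3))) + Gf L K th3)
     + max 0 (y - r) + min 0 (y + r))"

lemma Gf_clamp_cont:
  fixes L K a b :: real
  assumes L: "L > 0" and K: "K > 0" and ab: "-sqrt K \<le> a" "a \<le> b" "b \<le> sqrt K"
  shows "continuous_on UNIV (\<lambda>y. Gf L K (max a (min y b)))"
proof -
  have r: "sqrt K > 0" using K by simp
  have bd: "-1 \<le> max a (min y b) / sqrt K \<and> max a (min y b) / sqrt K \<le> 1" for y
  proof -
    have m: "-sqrt K \<le> max a (min y b)" "max a (min y b) \<le> sqrt K" using ab by auto
    show ?thesis using m r by (simp add: le_divide_eq divide_le_eq)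
  qed
  show ?thesis unfolding Gf_def
    apply (intro continuous_intros)
    using bd r L by auto
qed

lemma p_integral:
  fixes L K Ly :: real
  assumes L: "L > 0" and K: "K > 0" and Ly: "Ly > 0"
  shows "((\<lambda>y. Pout L (K - y\<^sup>2)) has_integral (Phi L K Ly - Phi L K (-Ly))) {-Ly..Ly}"
proof -
  define th3 where "th3 = sqrt (max 0 (K - L\<^sup>2))"
  define r where "r = sqrt K"
  have r: "r > 0" "r\<^sup>2 = K" using K by (auto simp: r_def)
  have th3: "0 \<le> th3" "th3 < r" "th3\<^sup>2 = max 0 (K - L\<^sup>2)"
    using K L by (auto simp: th3_def r_def max_def)
  show ?thesis
  proof (rule fundamental_theorem_of_calculus_interior_strong[where S="{-r, -th3, th3, r}"])
    show "finite {-r, -th3, th3, r}" by simp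
    show "-Ly \<le> Ly" using Ly by simp
    have c1: "continuous_on UNIV (\<lambda>y. Gf L K (max th3 (min y r)))"
      by (rule Gf_clamp_cont) (use L K th3 r in \<open>auto simp: r_def\<close>)
    have c2: "continuous_on UNIV (\<lambda>y. Gf L K (max (-r) (min y (-th3))))"
      by (rule Gf_clamp_cont) (use L K th3 r in \<open>auto simp: r_def\<close>)
    have "continuous_on UNIV (Phi L K)"
      unfolding Phi_def[abs_def] Let_def th3_def[symmetric] r_def[symmetric]
      by (intro continuous_intros c1 c2)
    then show "continuous_on {-Ly..Ly} (Phi L K)"
      by (rule continuous_on_subset) simp
    fix x assume x: "x \<in> {-Ly<..<Ly} - {-r, -th3, th3, r}"
    have GD: "\<And>t. -r < t \<Longrightarrow> t < r \<Longrightarrow> (Gf L K has_real_derivative (1 - sqrt (K - t\<^sup>2) / L)\<^sup>2) (at t)"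
      using Gf_deriv[OF L K] unfolding r_def by blast
    have d1: "((\<lambda>t. Gf L K (max th3 (min t r))) has_real_derivative
         (if th3 < x \<and> x < r then (1 - sqrt (K - x\<^sup>2) / L)\<^sup>2 else 0)) (at x)"
      apply (rule clamp_deriv) using x th3(1,2) r(1) apply auto[3]
      apply (rule GD) using th3(1,2) r(1) by linarith+
    have d2: "((\<lambda>t. Gf L K (max (-r) (min t (-th3)))) has_real_derivative
         (if -r < x \<and> x < -th3 then (1 - sqrt (K - x\<^sup>2) / L)\<^sup>2 else 0)) (at x)"
      apply (rule clamp_deriv) using x th3(1,2) r(1) apply auto[3]
      apply (rule GD) using th3(1,2) r(1) by linarith+
    have d3: "((\<lambda>t. max 0 (t - r)) has_real_derivative (if r < x then 1 else 0)) (at x)"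
      by (rule max0_deriv) (use x in auto)
    have d4: "((\<lambda>t. min 0 (t + r)) has_real_derivative (if x < -r then 1 else 0)) (at x)"
      by (rule min0_deriv) (use x in auto)
    have "(Phi L K has_real_derivative
       ((if th3 < x \<and> x < r then (1 - sqrt (K - x\<^sup>2) / L)\<^sup>2 else 0) - 0)
       + ((if -r < x \<and> x < -th3 then (1 - sqrt (K - x\<^sup>2) / L)\<^sup>2 else 0) + 0)
       + (if r < x then 1 else 0) + (if x < -r then 1 else 0)) (at x)"
      unfolding Phi_def[abs_def] Let_def th3_def[symmetric] r_def[symmetric]
      by (intro DERIV_add DERIV_diff d1 d2 d3 d4 DERIV_const)
    moreover have "((if th3 < x \<and> x < r then (1 - sqrt (K - x\<^sup>2) / L)\<^sup>2 else 0) - 0)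
       + ((if -r < x \<and> x < -th3 then (1 - sqrt (K - x\<^sup>2) / L)\<^sup>2 else 0) + 0)
       + (if r < x then 1 else 0) + (if x < -r then 1 else 0) = Pout L (K - x\<^sup>2)"
    proof -
      have xs: "x \<noteq> r" "x \<noteq> -r" "x \<noteq> th3" "x \<noteq> -th3" using x by auto
      define A where "A = (1 - sqrt (K - x\<^sup>2) / L)\<^sup>2"
      have th3K: "K - L\<^sup>2 \<le> th3\<^sup>2" using th3(3) by simp
      have "r < \<bar>x\<bar> \<or> (th3 < \<bar>x\<bar> \<and> \<bar>x\<bar> < r) \<or> \<bar>x\<bar> < th3"
        using xs th3 by (cases "x \<ge> 0") auto
      then consider "r < \<bar>x\<bar>" | "th3 < \<bar>x\<bar> \<and> \<bar>x\<bar> < r" | "\<bar>x\<bar> < th3" by blast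
      then show ?thesis
      proof cases
        case 1
        then have "r\<^sup>2 < \<bar>x\<bar>\<^sup>2" using r by (intro power_strict_mono) auto
        then have "K - x\<^sup>2 \<le> 0" using r by simp
        then have P: "Pout L (K - x\<^sup>2) = 1" by (simp add: Pout_def)
        have e1: "(if th3 < x \<and> x < r then A else 0) = 0" using 1 th3 by auto
        have e2: "(if -r < x \<and> x < -th3 then A else 0) = 0" using 1 th3 by auto
        have e3: "(if r < x then 1 else 0) + (if x < -r then 1 else (0::real)) = 1" using 1 r by auto
        show ?thesis unfolding A_def[symmetric] P e1 e2 using e3 by simp
      next
        case 2
        then have "\<bar>x\<bar>\<^sup>2 < r\<^sup>2" using th3 by (intro power_strict_mono) auto
        then have a: "0 < K - x\<^sup>2" using r by simp
        have "th3\<^sup>2 < \<bar>x\<bar>\<^sup>2" using 2 th3 by (intro power_strict_mono) auto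
        then have "K - x\<^sup>2 \<le> L\<^sup>2" using th3K by simp
        then have "sqrt (K - x\<^sup>2) \<le> L" using L by (metis abs_of_pos real_sqrt_abs real_sqrt_le_mono)
        then have b: "max 0 (1 - sqrt (K - x\<^sup>2) / L) = 1 - sqrt (K - x\<^sup>2) / L" using L by (simp add: field_simps)
        have P: "Pout L (K - x\<^sup>2) = A" using a b by (simp add: Pout_def A_def)
        have e3: "(if r < x then 1 else 0) = (0::real)" "(if x < -r then 1 else 0) = (0::real)" using 2 by auto
        have e12: "(if th3 < x \<and> x < r then A else 0) + (if -r < x \<and> x < -th3 then A else 0) = A"
          using 2 th3 by (cases "x \<ge> 0") auto
        show ?thesis unfolding A_def[symmetric] P e3 using e12 by simp
      next
        case 3
        then have t0: "th3 > 0" by auto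
        then have "th3\<^sup>2 = K - L\<^sup>2" using th3(3) by (simp add: max_def split: if_splits)
        moreover have "\<bar>x\<bar>\<^sup>2 < th3\<^sup>2" using 3 by (intro power_strict_mono) auto
        ultimately have lk: "L\<^sup>2 < K - x\<^sup>2" by simp
        then have "L < sqrt (K - x\<^sup>2)" using L by (metis abs_of_pos real_sqrt_abs real_sqrt_less_mono)
        then have b: "max 0 (1 - sqrt (K - x\<^sup>2) / L) = 0" using L by (simp add: field_simps)
        have a: "\<not> K - x\<^sup>2 \<le> 0" using lk L
          by (smt (verit) zero_less_power)
        have P: "Pout L (K - x\<^sup>2) = 0" using a b by (simp add: Pout_def)
        have e: "(if th3 < x \<and> x < r then A else 0) = 0" "(if -r < x \<and> x < -th3 then A else 0) = 0"
           "(if r < x then 1 else 0) = (0::real)" "(if x < -r then 1 else 0) = (0::real)"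
          using 3 th3 by auto
        show ?thesis unfolding A_def[symmetric] P e by simp
      qed
    qed
    ultimately show "(Phi L K has_vector_derivative Pout L (K - x\<^sup>2)) (at x)"
      unfolding has_real_derivative_iff_has_vector_derivative[symmetric] by simp
  qed
qed



lemma prob_U:
  fixes L :: real assumes "L > 0"
  shows "prob_space (uniform_measure lborel {-L..L})"
  by (rule prob_space_uniform_measure) (use assms in auto)

lemma x_total:
  fixes L c :: real
  assumes L: "L > 0"
  shows "(\<integral>\<^sup>+x1. (\<integral>\<^sup>+x2. indicator {x2. c \<le> ((x1 - x2)/2)^2} x2 \<partial>uniform_measure lborel {-L..L}) \<partial>uniform_measure lborel {-L..L})
     = ennreal (Pout L c)"
proof (cases "c \<le> 0")
  case True
  interpret P: prob_space "uniform_measure lborel {-L..L}" by (rule prob_U[OF L])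
  have "{x2. c \<le> ((x1 - x2)/2)^2} = UNIV" for x1 using True
    by (auto intro: order_trans[OF _ zero_le_power2])
  then show ?thesis using True by (simp add: Pout_def P.emeasure_space_1[simplified])
next
  case False
  then show ?thesis using x_outer[OF L, of c] by (simp add: Pout_def)
qed

lemma y_total:
  fixes L K Ly :: real
  assumes L: "L > 0" and K: "K > 0" and Ly: "Ly > 0"
  shows "(\<integral>\<^sup>+y. ennreal (Pout L (K - y\<^sup>2)) \<partial>uniform_measure lborel {-Ly..Ly})
     = ennreal ((Phi L K Ly - Phi L K (-Ly)) / (2 * Ly))"
proof -
  have "(\<integral>\<^sup>+y. ennreal (Pout L (K - y\<^sup>2)) \<partial>uniform_measure lborel {-Ly..Ly})
     = (\<integral>\<^sup>+y. ennreal (Pout L (K - y\<^sup>2)) * indicator {-Ly..Ly} y \<partial>lborel) / emeasure lborel {-Ly..Ly}"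
    by (rule nn_integral_uniform_measure) (auto simp: Pout_def)
  also have "(\<integral>\<^sup>+y. ennreal (Pout L (K - y\<^sup>2)) * indicator {-Ly..Ly} y \<partial>lborel) = ennreal (Phi L K Ly - Phi L K (-Ly))"
    by (rule nn_integral_has_integral_lebesgue'[OF _ p_integral[OF L K Ly]]) (simp add: Pout_def)
  also have "emeasure lborel {-Ly..Ly} = ennreal (2 * Ly)" using Ly by simp
  also have "ennreal (Phi L K Ly - Phi L K (-Ly)) / ennreal (2 * Ly) = ennreal ((Phi L K Ly - Phi L K (-Ly)) / (2 * Ly))"
  proof (rule divide_ennreal)
    have "((\<lambda>y. Pout L (K - y\<^sup>2)) has_integral (Phi L K Ly - Phi L K (-Ly))) {-Ly..Ly}"
      using p_integral[OF L K Ly] .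
    then show "0 \<le> Phi L K Ly - Phi L K (-Ly)"
      by (rule has_integral_nonneg) (simp add: Pout_def)
  qed (use Ly in simp)
  finally show ?thesis .
qed



lemma Gf_odd:
  assumes "K > 0" "\<bar>y\<bar> \<le> sqrt K"
  shows "Gf L K (-y) = - Gf L K y"
proof -
  have "-1 \<le> y / sqrt K" "y / sqrt K \<le> 1" using assms by (auto simp: field_simps abs_le_iff)
  then have "arcsin (- (y / sqrt K)) = - arcsin (y / sqrt K)" by (rule arcsin_minus)
  then show ?thesis unfolding Gf_def by (simp add: algebra_simps)
qed

lemma Phi_value:
  fixes L K Ly :: real
  assumes L: "L > 0" and K: "K > 0" and Ly: "Ly > 0"
  defines "th2 \<equiv> min Ly (sqrt K)" and "th3 \<equiv> sqrt (max 0 (K - L\<^sup>2))"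
  shows "(Phi L K Ly - Phi L K (-Ly)) / (2 * Ly)
     = 1 / Ly * (Ly - th2) + 1 / Ly * ((if th3 \<le> th2 then Gf L K th2 else 0) - (if th3 \<le> th2 then Gf L K th3 else 0))"
proof -
  define r where "r = sqrt K"
  have r: "r > 0" using K by (simp add: r_def)
  have t3: "0 \<le> th3" "th3 \<le> r" using K L by (auto simp: th3_def r_def max_def)
  define c where "c = max th3 (min Ly r)"
  have e1: "max (-r) (min Ly (-th3)) = -th3" using t3 Ly by auto
  have e2: "max th3 (min (-Ly) r) = th3" using t3 Ly by auto
  have e3: "max (-r) (min (-Ly) (-th3)) = - c" using t3 Ly by (auto simp: c_def)
  have c: "th3 \<le> c" "c \<le> r" using t3 by (auto simp: c_def)
  have o1: "Gf L K (-th3) = - Gf L K th3" using t3 K by (intro Gf_odd) (auto simp: r_def)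
  have o2: "Gf L K (-c) = - Gf L K c" using t3 c K by (intro Gf_odd) (auto simp: r_def)
  have p1: "Phi L K Ly = Gf L K c - Gf L K th3 + max 0 (Ly - r)"
    unfolding Phi_def Let_def th3_def[symmetric] r_def[symmetric] c_def[symmetric] e1
    using Ly r by (simp add: o1)
  have p2: "Phi L K (-Ly) = - (Gf L K c - Gf L K th3 + max 0 (Ly - r))"
    unfolding Phi_def Let_def th3_def[symmetric] r_def[symmetric] e2 e3
    using Ly r by (simp add: o2 max_def min_def)
  define D where "D = ((if th3 \<le> th2 then Gf L K th2 else 0) - (if th3 \<le> th2 then Gf L K th3 else 0))"
  have X: "Gf L K c - Gf L K th3 + max 0 (Ly - r) = (Ly - th2) + ((if th3 \<le> th2 then Gf L K th2 else 0) - (if th3 \<le> th2 then Gf L K th3 else 0))"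
  proof -
    consider "Ly \<le> th3" | "th3 < Ly \<and> Ly \<le> r" | "r < Ly" by linarith
    then show ?thesis
    proof cases
      case 1
      then show ?thesis using t3 by (auto simp: c_def th2_def r_def[symmetric])
    next
      case 2
      then show ?thesis using t3 by (auto simp: c_def th2_def r_def[symmetric])
    next
      case 3
      then show ?thesis using t3 by (auto simp: c_def th2_def r_def[symmetric])
    qed
  qed
  have "(Phi L K Ly - Phi L K (-Ly)) / (2 * Ly) = (Gf L K c - Gf L K th3 + max 0 (Ly - r)) / Ly"
    unfolding p1 p2 using Ly by (simp add: field_simps)
  also have "\<dots> = ((Ly - th2) + D) / Ly" unfolding X D_def ..
  also have "\<dots> = 1 / Ly * (Ly - th2) + 1 / Ly * D" by (simp add: add_divide_distrib)
  finally show ?thesis unfolding D_def .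
qed



lemma meas_test:
  fixes K :: real and A B C D :: "real measure"
  assumes "sets A = sets lborel" "sets B = sets lborel" "sets C = sets lborel" "sets D = sets lborel"
  shows "(\<lambda>\<omega>. indicator {\<omega>. K \<le> ((fst \<omega> - fst (snd (snd \<omega>)))/2)^2 + (fst (snd \<omega>))^2} \<omega> :: ennreal) \<in> borel_measurable (A \<Otimes>\<^sub>M (B \<Otimes>\<^sub>M (C \<Otimes>\<^sub>M D)))"
proof -
  have "(\<lambda>\<omega>. indicator {\<omega>. K \<le> ((fst \<omega> - fst (snd (snd \<omega>)))/2)^2 + (fst (snd \<omega>))^2} \<omega> :: ennreal) \<in> borel_measurable (lborel \<Otimes>\<^sub>M (lborel \<Otimes>\<^sub>M (lborel \<Otimes>\<^sub>M (lborel::real measure))))"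
    by measurable
  moreover have eq: "sets (A \<Otimes>\<^sub>M (B \<Otimes>\<^sub>M (C \<Otimes>\<^sub>M D))) = sets (lborel \<Otimes>\<^sub>M (lborel \<Otimes>\<^sub>M (lborel \<Otimes>\<^sub>M (lborel::real measure))))"
    by (intro sets_pair_measure_cong assms)
  ultimately show ?thesis using measurable_cong_sets[OF eq refl, of "borel :: ennreal measure"] by simp
qed

lemma nn_pair:
  assumes "prob_space M1" "prob_space M2" and f: "f \<in> borel_measurable (M1 \<Otimes>\<^sub>M M2)"
  shows "integral\<^sup>N (M1 \<Otimes>\<^sub>M M2) f = (\<integral>\<^sup>+x. (\<integral>\<^sup>+y. f (x, y) \<partial>M2) \<partial>M1)"
proof -
  interpret pair_sigma_finite M1 M2
    by (intro pair_sigma_finite.intro prob_space_imp_sigma_finite assms)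
  show ?thesis using M2.nn_integral_fst[OF f] by simp
qed

lemma slice_meas:
  assumes f: "f \<in> borel_measurable (M1 \<Otimes>\<^sub>M M2)" and a: "a \<in> space M1"
  shows "(\<lambda>y. f (a, y)) \<in> borel_measurable M2"
  using measurable_comp[OF measurable_Pair1'[OF a] f] by (simp add: o_def)

lemma nn4:
  assumes P: "prob_space A" "prob_space B" "prob_space C" "prob_space D"
    and f: "f \<in> borel_measurable (A \<Otimes>\<^sub>M (B \<Otimes>\<^sub>M (C \<Otimes>\<^sub>M D)))"
  shows "integral\<^sup>N (A \<Otimes>\<^sub>M (B \<Otimes>\<^sub>M (C \<Otimes>\<^sub>M D))) f
     = (\<integral>\<^sup>+a. (\<integral>\<^sup>+b. (\<integral>\<^sup>+c. (\<integral>\<^sup>+d. f (a, b, c, d) \<partial>D) \<partial>C) \<partial>B) \<partial>A)"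
proof -
  have PCD: "prob_space (C \<Otimes>\<^sub>M D)" by (intro prob_space_pair P)
  have PBCD: "prob_space (B \<Otimes>\<^sub>M (C \<Otimes>\<^sub>M D))" by (intro prob_space_pair P PCD)
  have "integral\<^sup>N (A \<Otimes>\<^sub>M (B \<Otimes>\<^sub>M (C \<Otimes>\<^sub>M D))) f
      = (\<integral>\<^sup>+a. (\<integral>\<^sup>+r. f (a, r) \<partial>(B \<Otimes>\<^sub>M (C \<Otimes>\<^sub>M D))) \<partial>A)"
    by (rule nn_pair[OF P(1) PBCD f])
  also have "\<dots> = (\<integral>\<^sup>+a. (\<integral>\<^sup>+b. (\<integral>\<^sup>+c. (\<integral>\<^sup>+d. f (a, b, c, d) \<partial>D) \<partial>C) \<partial>B) \<partial>A)"
  proof (rule nn_integral_cong)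
    fix a assume a: "a \<in> space A"
    have fa: "(\<lambda>r. f (a, r)) \<in> borel_measurable (B \<Otimes>\<^sub>M (C \<Otimes>\<^sub>M D))" by (rule slice_meas[OF f a])
    have "(\<integral>\<^sup>+r. f (a, r) \<partial>(B \<Otimes>\<^sub>M (C \<Otimes>\<^sub>M D))) = (\<integral>\<^sup>+b. (\<integral>\<^sup>+s. f (a, b, s) \<partial>(C \<Otimes>\<^sub>M D)) \<partial>B)"
      using nn_pair[OF P(2) PCD fa] by simp
    also have "\<dots> = (\<integral>\<^sup>+b. (\<integral>\<^sup>+c. (\<integral>\<^sup>+d. f (a, b, c, d) \<partial>D) \<partial>C) \<partial>B)"
    proof (rule nn_integral_cong)
      fix b assume b: "b \<in> space B"
      have fb: "(\<lambda>s. f (a, b, s)) \<in> borel_measurable (C \<Otimes>\<^sub>M D)" using slice_meas[OF fa b] by simp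
      show "(\<integral>\<^sup>+s. f (a, b, s) \<partial>(C \<Otimes>\<^sub>M D)) = (\<integral>\<^sup>+c. (\<integral>\<^sup>+d. f (a, b, c, d) \<partial>D) \<partial>C)"
        using nn_pair[OF P(3) P(4) fb] by simp
    qed
    finally show "(\<integral>\<^sup>+r. f (a, r) \<partial>(B \<Otimes>\<^sub>M (C \<Otimes>\<^sub>M D))) = (\<integral>\<^sup>+b. (\<integral>\<^sup>+c. (\<integral>\<^sup>+d. f (a, b, c, d) \<partial>D) \<partial>C) \<partial>B)" .
  qed
  finally show ?thesis .
qed


lemma core:
  fixes L Ly K :: real
  assumes L: "L > 0" and Ly: "Ly > 0" and K: "K > 0"
  shows "(\<integral>\<^sup>+a. (\<integral>\<^sup>+b. (\<integral>\<^sup>+c. indicator {x2. K - b\<^sup>2 \<le> ((a - x2)/2)^2} c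
            \<partial>uniform_measure lborel {-L..L}) \<partial>uniform_measure lborel {-Ly..Ly}) \<partial>uniform_measure lborel {-L..L})
     = ennreal ((Phi L K Ly - Phi L K (-Ly)) / (2 * Ly))"
proof -
  let ?Ux = "uniform_measure lborel {-L..L}"
  let ?Uy = "uniform_measure lborel {-Ly..Ly}"
  define g where "g a b = (\<integral>\<^sup>+c. indicator {x2. K - b\<^sup>2 \<le> ((a - x2)/2)^2} c \<partial>?Ux)" for a b
  have PUx: "prob_space ?Ux" by (rule prob_U[OF L])
  have PUy: "prob_space ?Uy" by (rule prob_U[OF Ly])
  interpret pair_sigma_finite ?Ux ?Uy
    by (intro pair_sigma_finite.intro prob_space_imp_sigma_finite PUx PUy)
  have m1: "(\<lambda>x. indicator {x2. K - (snd (fst x))\<^sup>2 \<le> ((fst (fst x) - x2)/2)^2} (snd x) :: ennreal)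
      \<in> borel_measurable ((lborel \<Otimes>\<^sub>M lborel) \<Otimes>\<^sub>M (lborel::real measure))"
    by measurable
  have eq1: "sets ((?Ux \<Otimes>\<^sub>M ?Uy) \<Otimes>\<^sub>M ?Ux) = sets ((lborel \<Otimes>\<^sub>M lborel) \<Otimes>\<^sub>M (lborel::real measure))"
    by (intro sets_pair_measure_cong) simp_all
  have m2: "(\<lambda>x. indicator {x2. K - (snd (fst x))\<^sup>2 \<le> ((fst (fst x) - x2)/2)^2} (snd x) :: ennreal)
      \<in> borel_measurable ((?Ux \<Otimes>\<^sub>M ?Uy) \<Otimes>\<^sub>M ?Ux)"
    using m1 measurable_cong_sets[OF eq1 refl, of "borel :: ennreal measure"] by simp
  have mg: "case_prod g \<in> borel_measurable (?Ux \<Otimes>\<^sub>M ?Uy)"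
  proof -
    have "(\<lambda>x. \<integral>\<^sup>+c. indicator {x2. K - (snd x)\<^sup>2 \<le> ((fst x - x2)/2)^2} c \<partial>?Ux) \<in> borel_measurable (?Ux \<Otimes>\<^sub>M ?Uy)"
      by (rule M1.borel_measurable_nn_integral) (use m2 in \<open>simp add: case_prod_beta\<close>)
    moreover have "case_prod g = (\<lambda>x. \<integral>\<^sup>+c. indicator {x2. K - (snd x)\<^sup>2 \<le> ((fst x - x2)/2)^2} c \<partial>?Ux)"
      unfolding g_def by (rule ext) (simp add: case_prod_beta)
    ultimately show ?thesis by simp
  qed
  have "(\<integral>\<^sup>+a. (\<integral>\<^sup>+b. g a b \<partial>?Uy) \<partial>?Ux) = (\<integral>\<^sup>+b. (\<integral>\<^sup>+a. g a b \<partial>?Ux) \<partial>?Uy)"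
    by (rule Fubini'[OF mg, symmetric])
  also have "\<dots> = (\<integral>\<^sup>+b. ennreal (Pout L (K - b\<^sup>2)) \<partial>?Uy)"
    unfolding g_def by (rule nn_integral_cong) (rule x_total[OF L])
  also have "\<dots> = ennreal ((Phi L K Ly - Phi L K (-Ly)) / (2 * Ly))"
    by (rule y_total[OF L K Ly])
  finally show ?thesis unfolding g_def .
qed



lemma meas4:
  fixes A B C D :: "real measure"
  assumes "sets A = sets lborel" "sets B = sets lborel" "sets C = sets lborel" "sets D = sets lborel"
    and f: "(f :: _ \<Rightarrow> ennreal) \<in> borel_measurable (lborel \<Otimes>\<^sub>M (lborel \<Otimes>\<^sub>M (lborel \<Otimes>\<^sub>M (lborel::real measure))))"
  shows "f \<in> borel_measurable (A \<Otimes>\<^sub>M (B \<Otimes>\<^sub>M (C \<Otimes>\<^sub>M D)))"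
proof -
  have eq: "sets (A \<Otimes>\<^sub>M (B \<Otimes>\<^sub>M (C \<Otimes>\<^sub>M D))) = sets (lborel \<Otimes>\<^sub>M (lborel \<Otimes>\<^sub>M (lborel \<Otimes>\<^sub>M (lborel::real measure))))"
    by (intro sets_pair_measure_cong assms)
  show ?thesis using f measurable_cong_sets[OF eq refl, of "borel :: ennreal measure"] by simp
qed

lemma nn_const_prob:
  assumes "prob_space M"
  shows "(\<integral>\<^sup>+x. c \<partial>M) = c"
proof -
  interpret prob_space M by fact
  show ?thesis by (simp add: emeasure_space_1)
qed

lemma Phi_nonneg:
  fixes L K Ly :: real
  assumes L: "L > 0" and K: "K > 0" and Ly: "Ly > 0"
  shows "0 \<le> (Phi L K Ly - Phi L K (-Ly)) / (2 * Ly)"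
proof -
  have "0 \<le> Phi L K Ly - Phi L K (-Ly)"
    using p_integral[OF L K Ly] by (rule has_integral_nonneg) (simp add: Pout_def)
  then show ?thesis using Ly by simp
qed

lemma main_emeasure:
  fixes L Ly K :: real and m :: nat
  assumes L: "L > 0" and Ly: "Ly > 0" and K: "K > 0" and m: "m \<in> {1, 2}"
  defines "Ux \<equiv> uniform_measure lborel {-L..L}" and "Uy \<equiv> uniform_measure lborel {-Ly..Ly}"
  shows "emeasure (Ux \<Otimes>\<^sub>M (Uy \<Otimes>\<^sub>M (Ux \<Otimes>\<^sub>M Uy)))
           {\<omega>. K \<le> ((xpos 1 \<omega> - xpos 2 \<omega>)/2)^2 + (ypos m \<omega>)^2}
     = ennreal ((Phi L K Ly - Phi L K (-Ly)) / (2 * Ly))"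
proof -
  have PUx: "prob_space Ux" unfolding Ux_def by (rule prob_U[OF L])
  have PUy: "prob_space Uy" unfolding Uy_def by (rule prob_U[OF Ly])
  define E where "E = {\<omega>. K \<le> ((xpos 1 \<omega> - xpos 2 \<omega>)/2)^2 + (ypos m \<omega>)^2}"
  define h where "h a b c = (indicator {x2. K - b\<^sup>2 \<le> ((a - x2)/2)^2} c :: ennreal)" for a b c
  have E1: "E = {\<omega>. K \<le> ((fst \<omega> - fst (snd (snd \<omega>)))/2)^2 + (fst (snd \<omega>))^2}" if "m = 1"
    using that by (auto simp: E_def xpos_def ypos_def split: prod.splits)
  have E2: "E = {\<omega>. K \<le> ((fst \<omega> - fst (snd (snd \<omega>)))/2)^2 + (snd (snd (snd \<omega>)))^2}" if "m = 2"
    using that by (auto simp: E_def xpos_def ypos_def split: prod.splits)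
  have mE: "(\<lambda>\<omega>. indicator E \<omega> :: ennreal) \<in> borel_measurable (Ux \<Otimes>\<^sub>M (Uy \<Otimes>\<^sub>M (Ux \<Otimes>\<^sub>M Uy)))"
    apply (rule meas4)
    apply (simp_all add: Ux_def Uy_def)[4]
    using m apply (elim insertE)
    apply (simp only: E1) apply measurable
    apply (simp only: E2) apply measurable
    by simp
  have "emeasure (Ux \<Otimes>\<^sub>M (Uy \<Otimes>\<^sub>M (Ux \<Otimes>\<^sub>M Uy))) E = (\<integral>\<^sup>+\<omega>. indicator E \<omega> \<partial>(Ux \<Otimes>\<^sub>M (Uy \<Otimes>\<^sub>M (Ux \<Otimes>\<^sub>M Uy))))"
  proof -
    have "E \<inter> space (Ux \<Otimes>\<^sub>M (Uy \<Otimes>\<^sub>M (Ux \<Otimes>\<^sub>M Uy))) \<in> sets (Ux \<Otimes>\<^sub>M (Uy \<Otimes>\<^sub>M (Ux \<Otimes>\<^sub>M Uy)))"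
      using mE borel_measurable_indicator_iff by blast
    then have sE: "E \<in> sets (Ux \<Otimes>\<^sub>M (Uy \<Otimes>\<^sub>M (Ux \<Otimes>\<^sub>M Uy)))"
      by (simp add: Ux_def Uy_def space_pair_measure)
    show ?thesis by (rule nn_integral_indicator[symmetric, OF sE])
  qed
  also have "\<dots> = (\<integral>\<^sup>+a. (\<integral>\<^sup>+b. (\<integral>\<^sup>+c. (\<integral>\<^sup>+e. indicator E (a, b, c, e) \<partial>Uy) \<partial>Ux) \<partial>Uy) \<partial>Ux)"
    by (rule nn4[OF PUx PUy PUx PUy mE])
  also have "\<dots> = (\<integral>\<^sup>+a. (\<integral>\<^sup>+b. (\<integral>\<^sup>+c. h a b c \<partial>Ux) \<partial>Uy) \<partial>Ux)"
  proof -
    interpret pair_sigma_finite Ux Uy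
      by (intro pair_sigma_finite.intro prob_space_imp_sigma_finite PUx PUy)
    consider "m = 1" | "m = 2" using m by blast
    then show ?thesis
    proof cases
      case 1
      have i: "indicator E (a, b, c, e) = h a b c" for a b c e
        unfolding E1[OF 1] h_def by (simp add: indicator_def)
      show ?thesis unfolding i by (simp add: prob_space.emeasure_space_1[OF PUy])
    next
      case 2
      have i: "indicator E (a, b, c, e) = h a e c" for a b c e
        unfolding E2[OF 2] h_def by (simp add: indicator_def)
      have sw: "(\<integral>\<^sup>+c. (\<integral>\<^sup>+e. h a e c \<partial>Uy) \<partial>Ux) = (\<integral>\<^sup>+e. (\<integral>\<^sup>+c. h a e c \<partial>Ux) \<partial>Uy)" for a
      proof -
        have m1: "(\<lambda>x. indicator {x2. K - (snd x)\<^sup>2 \<le> ((a - x2)/2)^2} (fst x) :: ennreal)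
            \<in> borel_measurable (lborel \<Otimes>\<^sub>M (lborel::real measure))"
          by measurable
        have eq1: "sets (Ux \<Otimes>\<^sub>M Uy) = sets (lborel \<Otimes>\<^sub>M (lborel::real measure))"
          by (intro sets_pair_measure_cong) (simp_all add: Ux_def Uy_def)
        have "(\<lambda>x. indicator {x2. K - (snd x)\<^sup>2 \<le> ((a - x2)/2)^2} (fst x) :: ennreal)
            \<in> borel_measurable (Ux \<Otimes>\<^sub>M Uy)"
          using m1 measurable_cong_sets[OF eq1 refl, of "borel :: ennreal measure"] by simp
        then have "(\<lambda>(c, e). h a e c) \<in> borel_measurable (Ux \<Otimes>\<^sub>M Uy)"
          by (simp add: h_def case_prod_beta')
        from Fubini'[OF this] show ?thesis by simp
      qed
      show ?thesis unfolding i by (simp add: prob_space.emeasure_space_1[OF PUy] sw)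
    qed
  qed
  also have "\<dots> = ennreal ((Phi L K Ly - Phi L K (-Ly)) / (2 * Ly))"
    unfolding h_def Ux_def Uy_def by (rule core[OF L Ly K])
  finally show ?thesis unfolding E_def .
qed



lemma gfun_Gf:
  assumes DL: "DL > 0" and th1: "th1 = th4 / (DL/2)\<^sup>2"
  shows "gfun DL th1 t2 t3 th4 y = (if t3 \<le> t2 then Gf (DL/2) th4 y else 0)"
  unfolding gfun_def Gf_def th1 using DL by (simp add: field_simps power2_eq_square)

theorem lemma2:
  fixes DL DW d eta sigma2 R Pbar :: real and m :: nat
  assumes "DL > 0" "DW > 0" "d > 0" "eta > 0" "sigma2 > 0" "R > 0" "Pbar > 0"
    and "m \<in> {1, 2}"
  shows "let eps = sigma2 / eta * (exp (2 * R) - 1);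
             th1 = 4 / DL\<^sup>2 * (Pbar / eps - d\<^sup>2);
             th2 = min (DW / 2) (sqrt (DL\<^sup>2 / 4 * th1));
             th3 = sqrt (max 0 (DL\<^sup>2 / 4 * (th1 - 1)));
             th4 = DL\<^sup>2 / 4 * th1;
             g = gfun DL th1 th2 th3 th4
         in outage_prob DL DW d eta sigma2 R Pbar m =
              (if Pbar / eps > d\<^sup>2 then
                 2 / DW * (DW / 2 - min (DW / 2) (sqrt (th1 * DL\<^sup>2 / 4)))
                 + 2 / DW * (g th2 - g th3)
               else 1)"
proof -
  note DL = assms(1) and DW = assms(2) and m = assms(8)
  define eps where "eps = sigma2 / eta * (exp (2 * R) - 1)"
  have eps: "eps > 0" unfolding eps_def using assms by simp
  define L where "L = DL / 2"
  define Ly where "Ly = DW / 2"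
  define K where "K = Pbar / eps - d\<^sup>2"
  have L: "L > 0" and Ly: "Ly > 0" using DL DW by (auto simp: L_def Ly_def)
  define Ux where "Ux = uniform_measure lborel {-L..L}"
  define Uy where "Uy = uniform_measure lborel {-Ly..Ly}"
  have US: "user_space DL DW = Ux \<Otimes>\<^sub>M (Uy \<Otimes>\<^sub>M (Ux \<Otimes>\<^sub>M Uy))"
    unfolding user_space_def Let_def Ux_def Uy_def L_def Ly_def by simp
  have PM: "prob_space (Ux \<Otimes>\<^sub>M (Uy \<Otimes>\<^sub>M (Ux \<Otimes>\<^sub>M Uy)))"
    unfolding Ux_def Uy_def by (intro prob_space_pair prob_U L Ly)
  have sp: "space (Ux \<Otimes>\<^sub>M (Uy \<Otimes>\<^sub>M (Ux \<Otimes>\<^sub>M Uy))) = UNIV"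
    by (simp add: Ux_def Uy_def space_pair_measure)
  have OP: "outage_prob DL DW d eta sigma2 R Pbar m
      = measure (Ux \<Otimes>\<^sub>M (Uy \<Otimes>\<^sub>M (Ux \<Otimes>\<^sub>M Uy))) {\<omega>. K \<le> ((xpos 1 \<omega> - xpos 2 \<omega>)/2)^2 + (ypos m \<omega>)^2}"
  proof -
    have "(Pbar \<le> eps * ((xpos 1 \<omega> + xpos 2 \<omega>) / 2 - xpos m \<omega>)\<^sup>2 + eps * ((ypos m \<omega>)\<^sup>2 + d\<^sup>2))
        \<longleftrightarrow> K \<le> ((xpos 1 \<omega> - xpos 2 \<omega>)/2)^2 + (ypos m \<omega>)^2" for \<omega>
    proof -
      have sq: "((xpos 1 \<omega> + xpos 2 \<omega>) / 2 - xpos m \<omega>)\<^sup>2 = ((xpos 1 \<omega> - xpos 2 \<omega>)/2)^2"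
        using m by (elim insertE) (simp_all add: power2_eq_square algebra_simps)
      have "(Pbar \<le> eps * ((xpos 1 \<omega> + xpos 2 \<omega>) / 2 - xpos m \<omega>)\<^sup>2 + eps * ((ypos m \<omega>)\<^sup>2 + d\<^sup>2))
          \<longleftrightarrow> Pbar \<le> eps * (((xpos 1 \<omega> - xpos 2 \<omega>)/2)^2 + (ypos m \<omega>)\<^sup>2 + d\<^sup>2)"
        unfolding sq by (simp add: algebra_simps)
      also have "\<dots> \<longleftrightarrow> Pbar / eps \<le> ((xpos 1 \<omega> - xpos 2 \<omega>)/2)^2 + (ypos m \<omega>)\<^sup>2 + d\<^sup>2"
        using eps by (simp add: pos_divide_le_eq mult.commute)
      finally show ?thesis unfolding K_def by linarith
    qed
    then show ?thesis
      unfolding outage_prob_def Let_def eps_def[symmetric] US sp by simp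
  qed
  show ?thesis
  proof (cases "Pbar / eps > d\<^sup>2")
    case False
    then have "K \<le> 0" unfolding K_def by simp
    then have "{\<omega>. K \<le> ((xpos 1 \<omega> - xpos 2 \<omega>)/2)^2 + (ypos m \<omega>)^2} = space (Ux \<Otimes>\<^sub>M (Uy \<Otimes>\<^sub>M (Ux \<Otimes>\<^sub>M Uy)))"
      unfolding sp by (auto intro: add_nonneg_nonneg order_trans)
    then have "outage_prob DL DW d eta sigma2 R Pbar m = 1"
      unfolding OP using prob_space.prob_space[OF PM] by simp
    then show ?thesis using False unfolding Let_def eps_def[symmetric] by simp
  next
    case True
    then have K: "K > 0" unfolding K_def by simp
    have v: "outage_prob DL DW d eta sigma2 R Pbar m = (Phi L K Ly - Phi L K (-Ly)) / (2 * Ly)"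
      unfolding OP measure_def Ux_def Uy_def main_emeasure[OF L Ly K m]
      using Phi_nonneg[OF L K Ly] by simp
    have a1: "4 / DL\<^sup>2 * (Pbar / eps - d\<^sup>2) = K / L\<^sup>2"
      unfolding K_def L_def using DL by (simp add: field_simps power2_eq_square)
    have a2: "DL\<^sup>2 / 4 * (K / L\<^sup>2) = K" unfolding L_def using DL by (simp add: field_simps power2_eq_square)
    have a3: "DL\<^sup>2 / 4 * (K / L\<^sup>2 - 1) = K - L\<^sup>2" unfolding L_def using DL by (simp add: field_simps power2_eq_square)
    have a4: "K / L\<^sup>2 * DL\<^sup>2 / 4 = K" unfolding L_def using DL by (simp add: field_simps power2_eq_square)
    have a5: "DW / 2 = Ly" "2 / DW = 1 / Ly" unfolding Ly_def by simp_all
    have gg: "gfun DL (K / L\<^sup>2) t2 t3 K y = (if t3 \<le> t2 then Gf L K y else 0)" for t2 t3 y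
      using gfun_Gf[OF DL, of "K / L\<^sup>2" K t2 t3 y] unfolding L_def by simp
    show ?thesis
      unfolding Let_def eps_def[symmetric] a1 a2 a3 a4 a5 gg
      using True v Phi_value[OF L K Ly] by simp
  qed
qed

end
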